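(* Assume (A1) differentiability, (A2) convexity, (A3) $\mu$-strong convexity of $f$, (SS) Star Similarity with constant $\delta_*>0$ (with respect to the minimizer $x_*$ of $f$), and (BV) bounded variance at the optimum with constant $\sigma_*^2$. If $0<\gamma\le\frac{\mu}{4\delta_*^2}$, then the iterates of SPPM satisfy, for every $k\ge0$, $$\mathbb{E}\big[\|x_k-x_*\|^2\big]\le\left(1-\frac12\min\Big(\frac{\gamma\mu}{2},1\Big)\right)^k\|x_0-x_*\|^2+4\max\Big(\frac{2}{\gamma\mu},1\Big)\gamma^2\sigma_*^2 .$$
   Context: Setting: $\mathcal{D}$ is a probability distribution over samples $\xi$; for each $\xi$, $f_\xi:\mathbb{R}^d\to\mathbb{R}$; $f(x)=\mathbb{E}_{\xi\sim\mathcal{D}}[f_\xi(x)]$, with $\nabla f(x)=\mathbb{E}[\nabla f_\xi(x)]$. Assumptions: (A1) $f_\xi$ differentiable for $\mathcal{D}$-a.e. $\xi$; (A2) $f_\xi$ convex for $\mathcal{D}$-a.e. $\xi$; (A3) $f(x)\ge f(y)+\langle\nabla f(y),x-y\rangle+\frac\mu2\|x-y\|^2$ for all $x,y$; (SS) (Star Similarity) there exist a minimizer $x_*$ of $f$ and $\delta_*>0$ with $\mathbb{E}_{\xi}\big[\|\nabla f_\xi(x)-\nabla f(x)-\nabla f_\xi(x_* )\|^2\big]\le\delta_*^2\|x-x_*\|^2$ for all $x$; (BV) $\mathbb{E}_{\xi\sim\mathcal{D}}[\|\nabla f_\xi(x_* )\|^2]\le\sigma_*^2$. No interpolation is assumed.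 SPPM: given $\gamma>0$, $x_0$, and i.i.d. $\xi_0,\xi_1,\dots\sim\mathcal{D}$, set $x_{k+1}=\arg\min_{z}\{f_{\xi_k}(z)+\frac{1}{2\gamma}\|z-x_k\|^2\}$. *)

theory Defs
  imports "HOL-Analysis.Analysis" "HOL-Probability.Probability"
begin

text \<open>Proximal operator: prox_gamma_h(x) = argmin_z { h z + 1/(2 gamma) ||z - x||^2 }.
  (For convex differentiable h and gamma > 0 the minimizer exists and is unique.)\<close>
definition prox :: "real \<Rightarrow> ('a::real_normed_vector \<Rightarrow> real) \<Rightarrow> 'a \<Rightarrow> 'a" where
  "prox \<gamma> h x = (SOME z. \<forall>w. h z + (norm (z - x))\<^sup>2 / (2 * \<gamma>) \<le> h w + (norm (w - x))\<^sup>2 / (2 * \<gamma>))"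

text \<open>SPPM iterates driven by the sample sequence \<omega> = (xi_0, xi_1, ...):
  x_0 = x0,  x_(k+1) = prox_(gamma f_(xi_k)) (x_k).  x_k depends only on xi_0..xi_(k-1).\<close>
fun sppm :: "real \<Rightarrow> ('b \<Rightarrow> 'a::real_normed_vector \<Rightarrow> real) \<Rightarrow> 'a \<Rightarrow> (nat \<Rightarrow> 'b) \<Rightarrow> nat \<Rightarrow> 'a" where
  "sppm \<gamma> f x0 \<omega> 0 = x0"
| "sppm \<gamma> f x0 \<omega> (Suc k) = prox \<gamma> (f (\<omega> k)) (sppm \<gamma> f x0 \<omega> k)"

end

theory Submission
  imports Defs
begin

lemma three_point:
  fixes h :: "'a::real_inner \<Rightarrow> real"
  assumes cvx: "convex_on UNIV h" and gp: "\<gamma> > 0"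
    and mn: "\<forall>w. h y + (norm (y - x))\<^sup>2 / (2*\<gamma>) \<le> h w + (norm (w - x))\<^sup>2 / (2*\<gamma>)"
  shows "h y + (norm (y - x))\<^sup>2 / (2*\<gamma>) + (norm (w - y))\<^sup>2 / (2*\<gamma>) \<le> h w + (norm (w - x))\<^sup>2 / (2*\<gamma>)"
proof -
  define d where "d = w - y"
  define A where "A = h w - h y + inner (y - x) d / \<gamma>"
  define B where "B = (norm d)\<^sup>2 / (2*\<gamma>)"
  have B0: "B \<ge> 0" unfolding B_def using gp by simp
  have key: "0 \<le> A + t * B" if t: "0 < t" "t \<le> 1" for t
  proof -
    have e: "y + t *\<^sub>R d = (1 - t) *\<^sub>R y + t *\<^sub>R w" unfolding d_def by (simp add: algebra_simps)
    have c1: "h (y + t *\<^sub>R d) \<le> (1 - t) * h y + t * h w"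
      unfolding e using convex_onD[OF cvx, of t y w] t by simp
    have n1: "(norm (y + t *\<^sub>R d - x))\<^sup>2 = (norm (y - x))\<^sup>2 + 2 * t * inner (y - x) d + t\<^sup>2 * (norm d)\<^sup>2"
    proof -
      have "y + t *\<^sub>R d - x = (y - x) + t *\<^sub>R d" by simp
      then show ?thesis
        by (simp only: power2_norm_eq_inner inner_add_left inner_add_right inner_scaleR_left inner_scaleR_right inner_commute[of d "y-x"]) (simp add: power2_eq_square algebra_simps)
    qed
    have "h y + (norm (y - x))\<^sup>2 / (2*\<gamma>) \<le> h (y + t *\<^sub>R d) + (norm (y + t *\<^sub>R d - x))\<^sup>2 / (2*\<gamma>)"
      using mn by blast
    also have "\<dots> \<le> (1 - t) * h y + t * h w + ((norm (y - x))\<^sup>2 + 2 * t * inner (y - x) d + t\<^sup>2 * (norm d)\<^sup>2) / (2*\<gamma>)"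
      using c1 n1 by simp
    finally have ineq: "h y + (norm (y - x))\<^sup>2 / (2*\<gamma>) \<le> (1 - t) * h y + t * h w + ((norm (y - x))\<^sup>2 + 2 * t * inner (y - x) d + t\<^sup>2 * (norm d)\<^sup>2) / (2*\<gamma>)" .
    have eq: "(1 - t) * h y + t * h w + ((norm (y - x))\<^sup>2 + 2 * t * inner (y - x) d + t\<^sup>2 * (norm d)\<^sup>2) / (2*\<gamma>) - (h y + (norm (y - x))\<^sup>2 / (2*\<gamma>)) = t * (A + t * B)"
      unfolding A_def B_def using gp by (simp add: field_simps power2_eq_square)
    have "0 \<le> t * (A + t * B)" using ineq eq by linarith
    then show ?thesis using t by (simp add: zero_le_mult_iff)
  qed
  have A0: "0 \<le> A"
  proof (rule ccontr)
    assume "\<not> 0 \<le> A"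
    hence An: "A < 0" by simp
    show False
    proof (cases "B = 0")
      case True then show False using key[of 1] An by simp
    next
      case False
      hence Bp: "B > 0" using B0 by simp
      define t where "t = min 1 (- A / (2 * B))"
      have t0: "0 < t" "t \<le> 1" unfolding t_def using An Bp by (auto simp: divide_neg_pos)
      have "t * B \<le> (- A / (2 * B)) * B" unfolding t_def using Bp by (intro mult_right_mono) auto
      also have "\<dots> = - A / 2" using Bp by simp
      finally have "A + t * B < 0" using An by simp
      thus False using key[OF t0] by simp
    qed
  qed
  have n2: "(norm (w - x))\<^sup>2 = (norm d)\<^sup>2 + 2 * inner (y - x) d + (norm (y - x))\<^sup>2"
  proof -
    have "w - x = d + (y - x)" unfolding d_def by simp
    then show ?thesis
      by (simp only: power2_norm_eq_inner inner_add_left inner_add_right inner_commute[of d "y-x"])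
  qed
  have "h w + (norm (w - x))\<^sup>2 / (2*\<gamma>) - (h y + (norm (y - x))\<^sup>2 / (2*\<gamma>) + (norm (w - y))\<^sup>2 / (2*\<gamma>)) = A"
    unfolding n2 A_def d_def using gp by (simp add: field_simps)
  then show ?thesis using A0 by linarith
qed

lemma tangent:
  fixes h :: "'a::real_inner \<Rightarrow> real"
  assumes cvx: "convex_on UNIV h" and der: "(h has_derivative (\<lambda>v. inner v D)) (at c)"
  shows "h c + inner (w - c) D \<le> h w"
proof -
  define d where "d = w - c"
  define \<phi> where "\<phi> = (\<lambda>t::real. h (c + t *\<^sub>R d))"
  have cphi: "convex_on UNIV \<phi>"
  proof (rule convex_onI)
    fix t a b :: real assume t: "t > 0" "t < 1"
    have e: "c + ((1 - t) * a + t * b) *\<^sub>R d = (1 - t) *\<^sub>R (c + a *\<^sub>R d) + t *\<^sub>R (c + b *\<^sub>R d)"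
      by (simp add: algebra_simps)
    show "\<phi> ((1 - t) *\<^sub>R a + t *\<^sub>R b) \<le> (1 - t) * \<phi> a + t * \<phi> b"
      unfolding \<phi>_def using e convex_onD[OF cvx, of t "c + a *\<^sub>R d" "c + b *\<^sub>R d"] t by simp
  qed simp
  have "((\<lambda>t. c + t *\<^sub>R d) has_derivative (\<lambda>t. t *\<^sub>R d)) (at 0)"
    by (auto intro!: derivative_eq_intros)
  moreover have "(h has_derivative (\<lambda>v. inner v D)) (at (c + 0 *\<^sub>R d))" using der by simp
  ultimately have "((\<lambda>t. h (c + t *\<^sub>R d)) has_derivative (\<lambda>t. inner (t *\<^sub>R d) D)) (at 0)"
    using has_derivative_compose[of "\<lambda>t. c + t *\<^sub>R d" "\<lambda>t. t *\<^sub>R d" 0 UNIV h "\<lambda>v. inner v D"]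
    by (simp add: o_def)
  hence "(\<phi> has_field_derivative (inner d D)) (at 0)"
    unfolding \<phi>_def has_field_derivative_def
    by (rule has_derivative_eq_rhs) (auto simp: fun_eq_iff mult.commute)
  hence "inner d D * (1 - 0) \<le> \<phi> 1 - \<phi> 0"
    using convex_on_imp_above_tangent[OF cphi, of 0 1 "inner d D"] by simp
  thus ?thesis unfolding \<phi>_def d_def by simp
qed

lemma exists_min:
  fixes \<phi> :: "'a::euclidean_space \<Rightarrow> real"
  assumes cont: "continuous_on UNIV \<phi>" and c: "c > 0"
    and lb: "\<And>w. a - b * norm (w - x) + c * (norm (w - x))\<^sup>2 \<le> \<phi> w"
  shows "\<exists>z. \<forall>w. \<phi> z \<le> \<phi> w"
proof -
  define R where "R = (\<bar>b\<bar> + \<bar>\<phi> x - a\<bar>) / c + 1"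
  have R1: "R \<ge> 1" unfolding R_def using c by simp
  obtain z where z: "z \<in> cball x R" "\<forall>y\<in>cball x R. \<phi> z \<le> \<phi> y"
    using continuous_attains_inf[of "cball x R" \<phi>] cont R1 compact_cball[of x R]
    by (metis cball_eq_empty continuous_on_subset linorder_not_less order.trans top_greatest zero_le_one)
  have "\<phi> z \<le> \<phi> w" for w
  proof (cases "w \<in> cball x R")
    case True then show ?thesis using z by blast
  next
    case False
    define r where "r = norm (w - x)"
    have rR: "r > R" using False unfolding r_def by (simp add: dist_norm norm_minus_commute)
    have "c * r \<ge> c * R" using rR c by simp
    also have "c * R = \<bar>b\<bar> + \<bar>\<phi> x - a\<bar> + c" unfolding R_def using c by (simp add: field_simps)
    finally have cr: "c * r - b \<ge> \<bar>\<phi> x - a\<bar> + c" by linarith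
    have "r * (c * r - b) \<ge> 1 * (c * r - b)"
      using rR R1 cr c by (intro mult_right_mono) auto
    hence "c * r\<^sup>2 - b * r > \<phi> x - a" using cr c by (simp add: power2_eq_square algebra_simps)
    hence "\<phi> w > \<phi> x" using lb[of w] unfolding r_def by simp
    moreover have "x \<in> cball x R" using R1 by simp
    ultimately have "\<phi> z \<le> \<phi> x" "\<phi> x < \<phi> w" using z by auto
    thus ?thesis by linarith
  qed
  thus ?thesis by blast
qed

lemma prox_spec:
  fixes h :: "'a::euclidean_space \<Rightarrow> real"
  assumes cvx: "convex_on UNIV h" and der: "\<And>v. (h has_derivative (\<lambda>u. inner u (gh v))) (at v)"
    and gp: "\<gamma> > 0"
  shows "\<forall>w. h (prox \<gamma> h x) + (norm (prox \<gamma> h x - x))\<^sup>2 / (2 * \<gamma>) \<le> h w + (norm (w - x))\<^sup>2 / (2 * \<gamma>)"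
proof -
  have conth: "continuous_on UNIV h"
    using der by (meson continuous_at_imp_continuous_on has_derivative_continuous)
  have "\<exists>z. \<forall>w. h z + (norm (z - x))\<^sup>2 / (2 * \<gamma>) \<le> h w + (norm (w - x))\<^sup>2 / (2 * \<gamma>)"
  proof (rule exists_min[where c = "1/(2*\<gamma>)" and a = "h x" and b = "norm (gh x)" and x = x])
    show "continuous_on UNIV (\<lambda>z. h z + (norm (z - x))\<^sup>2 / (2 * \<gamma>))"
      using gp by (intro continuous_intros conth) auto
    show "0 < 1 / (2 * \<gamma>)" using gp by simp
    fix w
    have "h x + inner (w - x) (gh x) \<le> h w" by (rule tangent[OF cvx der])
    moreover have "- (norm (gh x) * norm (w - x)) \<le> inner (w - x) (gh x)"
      using norm_cauchy_schwarz[of "x - w" "gh x"] by (simp add: norm_minus_commute inner_diff_left algebra_simps)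
    ultimately show "h x - norm (gh x) * norm (w - x) + 1 / (2 * \<gamma>) * (norm (w - x))\<^sup>2
          \<le> h w + (norm (w - x))\<^sup>2 / (2 * \<gamma>)" by simp
  qed
  then show ?thesis unfolding prox_def by (rule someI_ex)
qed

lemma lower_insert:
  fixes k :: nat
  assumes D: "prob_space D"
  shows "integral\<^sup>N (PiM (insert k {..<k}) (\<lambda>_. D)) f
     \<le> (\<integral>\<^sup>+ x. (\<integral>\<^sup>+ y. f (x(k := y)) \<partial>D) \<partial>(PiM {..<k} (\<lambda>_. D)))"
proof -
  interpret PS: product_sigma_finite "\<lambda>_::nat. D"
    by (simp add: product_sigma_finite_def prob_space_imp_sigma_finite D)
  show ?thesis
    unfolding nn_integral_def[of "PiM (insert k {..<k}) (\<lambda>_. D)" f]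
  proof (rule SUP_least)
    fix s assume "s \<in> {g. simple_function (PiM (insert k {..<k}) (\<lambda>_. D)) g \<and> g \<le> f}"
    hence s: "simple_function (PiM (insert k {..<k}) (\<lambda>_. D)) s" "s \<le> f" by auto
    have "integral\<^sup>S (PiM (insert k {..<k}) (\<lambda>_. D)) s = integral\<^sup>N (PiM (insert k {..<k}) (\<lambda>_. D)) s"
      using s by (simp add: nn_integral_eq_simple_integral)
    also have "\<dots> = (\<integral>\<^sup>+ x. (\<integral>\<^sup>+ y. s (x(k := y)) \<partial>D) \<partial>(PiM {..<k} (\<lambda>_. D)))"
      using PS.product_nn_integral_insert[where I="{..<k}" and i=k and f=s] s by (simp add: borel_measurable_simple_function)
    also have "\<dots> \<le> (\<integral>\<^sup>+ x. (\<integral>\<^sup>+ y. f (x(k := y)) \<partial>D) \<partial>(PiM {..<k} (\<lambda>_. D)))"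
      using s(2) by (intro nn_integral_mono) (auto simp: le_fun_def)
    finally show "integral\<^sup>S (PiM (insert k {..<k}) (\<lambda>_. D)) s
       \<le> (\<integral>\<^sup>+ x. (\<integral>\<^sup>+ y. f (x(k := y)) \<partial>D) \<partial>(PiM {..<k} (\<lambda>_. D)))" .
  qed
qed

lemma affine_bound:
  assumes M: "prob_space M" and a: "a > 0" and c: "c < top"
  shows "(\<integral>\<^sup>+ x. ennreal a * u x + c \<partial>M) \<le> ennreal a * integral\<^sup>N M u + c"
  unfolding nn_integral_def[of M "\<lambda>x. ennreal a * u x + c"]
proof (rule SUP_least)
  interpret prob_space M by (rule M)
  fix s assume "s \<in> {g. simple_function M g \<and> g \<le> (\<lambda>x. ennreal a * u x + c)}"
  hence s: "simple_function M s" "\<And>x. s x \<le> ennreal a * u x + c" by (auto simp: le_fun_def)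
  define t where "t = (\<lambda>x. (s x - c) * ennreal (1/a))"
  have ts: "simple_function M t"
  proof -
    have "t = (\<lambda>v. (v - c) * ennreal (1/a)) \<circ> s" unfolding t_def by auto
    thus ?thesis using s(1) by simp
  qed
  have inv: "ennreal a * ennreal (1/a) = 1" using a by (simp flip: ennreal_mult)
  have tu: "t x \<le> u x" for x
  proof -
    have "s x - c \<le> ennreal a * u x"
      using s(2)[of x] c by (auto simp: ennreal_minus_le_iff add.commute)
    hence "(s x - c) * ennreal (1/a) \<le> ennreal a * u x * ennreal (1/a)" by (rule mult_right_mono) simp
    also have "\<dots> = u x" using inv by (metis mult.commute mult.left_commute mult_1)
    finally show ?thesis unfolding t_def .
  qed
  have st: "s x \<le> ennreal a * t x + c" for x
  proof -
    have "ennreal a * t x = s x - c" unfolding t_def using inv by (metis mult.commute mult.left_commute mult_1)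
    moreover have "s x \<le> (s x - c) + c"
      by (simp add: ennreal_minus_le_iff[symmetric] add.commute) (metis add.commute diff_le_self_ennreal ennreal_minus_le_iff order_refl)
    ultimately show ?thesis by simp
  qed
  have "integral\<^sup>S M s \<le> integral\<^sup>S M (\<lambda>x. ennreal a * t x + c)"
    using s(1) ts st by (intro simple_integral_mono) auto
  also have "\<dots> = ennreal a * integral\<^sup>S M t + c"
    using ts by (subst simple_integral_add) (auto simp: emeasure_space_1)
  also have "integral\<^sup>S M t = integral\<^sup>N M t" using ts by (simp add: nn_integral_eq_simple_integral)
  also have "\<dots> \<le> integral\<^sup>N M u" using tu by (intro nn_integral_mono) auto
  finally show "integral\<^sup>S M s \<le> ennreal a * integral\<^sup>N M u + c"
    by (meson add_right_mono mult_left_mono order_trans zero_le)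
qed

lemma sppm_upd:
  "j \<le> k \<Longrightarrow> sppm g ff x0 (w(k := e)) j = sppm g ff x0 w j"
  by (induction j) auto

lemma grad_zero_at_min:
  fixes F :: "'a::real_inner \<Rightarrow> real"
  assumes "(F has_derivative (\<lambda>h. inner h D)) (at z)" "\<And>w. F z \<le> F w"
  shows "D = 0"
proof -
  have "(\<lambda>h. inner h D) = (\<lambda>h. 0)"
    using has_derivative_local_min[OF assms(1)] assms(2) by (simp add: always_eventually)
  hence "inner D D = 0" by meson
  thus ?thesis by simp
qed

lemma prox_grad:
  fixes F :: "'a::real_inner \<Rightarrow> real"
  assumes der: "(F has_derivative (\<lambda>h. inner h (Gz))) (at z)" and gp: "\<gamma> > 0"
    and mn: "\<And>w. F z + (norm (z - x))\<^sup>2 / (2 * \<gamma>) \<le> F w + (norm (w - x))\<^sup>2 / (2 * \<gamma>)"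
  shows "Gz = (1/\<gamma>) *\<^sub>R (x - z)"
proof -
  define c where "c = 1 / (2 * \<gamma>)"
  have e: "\<And>w. F w + (norm (w - x))\<^sup>2 / (2 * \<gamma>) = F w + c * inner (w - x) (w - x)"
    by (simp add: power2_norm_eq_inner c_def)
  have d1: "((\<lambda>w. inner (w - x) (w - x)) has_derivative (\<lambda>h. inner (z - x) h + inner h (z - x))) (at z)"
    by (auto intro!: derivative_eq_intros)
  have d2: "((\<lambda>w. F w + c * inner (w - x) (w - x)) has_derivative
          (\<lambda>h. inner h (Gz) + c * (inner (z - x) h + inner h (z - x)))) (at z)"
    by (rule has_derivative_add[OF der has_derivative_mult_right[OF d1]])
  have eq: "(\<lambda>h. inner h (Gz) + c * (inner (z - x) h + inner h (z - x)))
      = (\<lambda>h. inner h (Gz + (1/\<gamma>) *\<^sub>R (z - x)))"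
  proof
    fix h
    have "inner (z - x) h = inner h (z - x)" by (rule inner_commute)
    thus "inner h (Gz) + c * (inner (z - x) h + inner h (z - x)) = inner h (Gz + (1/\<gamma>) *\<^sub>R (z - x))"
      unfolding c_def using gp by (simp only: inner_add_right inner_scaleR_right) (simp add: field_simps)
  qed
  have "Gz + (1/\<gamma>) *\<^sub>R (z - x) = 0"
    by (rule grad_zero_at_min[OF d2[unfolded eq]]) (metis mn e)
  thus ?thesis by (simp add: algebra_simps)
qed

lemma alg_ident:
  fixes u v e :: "'a::real_inner"
  assumes gp: "\<gamma> > 0"
  shows "- (norm (u - v))\<^sup>2 - 2 * \<gamma> * inner u ((1/\<gamma>) *\<^sub>R v + e)
     = - (norm v)\<^sup>2 + \<gamma>\<^sup>2 * (norm e)\<^sup>2 - (norm (u + \<gamma> *\<^sub>R e))\<^sup>2"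
proof -
  have 1: "(norm (u - v))\<^sup>2 = inner u u - 2 * inner u v + inner v v"
    by (simp add: power2_norm_eq_inner inner_diff_left inner_diff_right inner_commute[of v u])
  have 2: "(norm (u + \<gamma> *\<^sub>R e))\<^sup>2 = inner u u + 2 * \<gamma> * inner u e + \<gamma>\<^sup>2 * inner e e"
    unfolding power2_norm_eq_inner by (simp add: inner_add_left inner_add_right inner_commute[of e u] power2_eq_square distrib_left)
  have 3: "inner u ((1/\<gamma>) *\<^sub>R v + e) = (1/\<gamma>) * inner u v + inner u e"
    by (simp add: inner_add_right)
  show ?thesis unfolding 1 2 3 using gp by (simp add: power2_norm_eq_inner field_simps distrib_left)
qed

lemma norm_sum_sq: "(norm (a + b :: 'a::real_normed_vector))\<^sup>2 \<le> 2 * (norm a)\<^sup>2 + 2 * (norm b)\<^sup>2"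
proof -
  have "norm (a + b) \<le> norm a + norm b" by (rule norm_triangle_ineq)
  hence "(norm (a + b))\<^sup>2 \<le> (norm a + norm b)\<^sup>2" by (simp add: power_mono)
  moreover have "(norm a + norm b)\<^sup>2 + (norm a - norm b)\<^sup>2 = 2 * (norm a)\<^sup>2 + 2 * (norm b)\<^sup>2"
    by (simp add: power2_eq_square algebra_simps)
  moreover have "(norm a - norm b)\<^sup>2 \<ge> 0" by simp
  ultimately show ?thesis by linarith
qed

lemma rate_ineq:
  fixes c p q r :: real
  assumes c: "c > 0" and pq: "p \<ge> 0" "q \<ge> 0" "r \<ge> 0" and tri: "r \<le> p + q"
  shows "(1/2 * min c 1) * r\<^sup>2 \<le> p\<^sup>2 + c * q\<^sup>2"
proof -
  have h1: "(1 + c) * (p\<^sup>2 + c * q\<^sup>2) - c * (p + q)\<^sup>2 = (p - c * q)\<^sup>2"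
    by (simp add: power2_eq_square algebra_simps)
  have h2: "c * (p + q)\<^sup>2 \<le> (1 + c) * (p\<^sup>2 + c * q\<^sup>2)"
    using h1 zero_le_power2[of "p - c*q"] by linarith
  have h3: "1/2 * min c 1 * (1 + c) \<le> c"
    using c by (cases "c \<le> 1") (auto simp: min_def)
  have h4: "r\<^sup>2 \<le> (p + q)\<^sup>2" using tri pq by (intro power_mono) auto
  have m0: "0 \<le> 1/2 * min c 1" using c by simp
  have "(1/2 * min c 1) * r\<^sup>2 \<le> (1/2 * min c 1) * (p + q)\<^sup>2" using h4 m0 by (rule mult_left_mono)
  also have "(1 + c) * ((1/2 * min c 1) * (p + q)\<^sup>2) \<le> c * (p + q)\<^sup>2"
    using h3 by (metis mult.assoc mult.commute mult_right_mono zero_le_power2)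
  hence "(1/2 * min c 1) * (p + q)\<^sup>2 \<le> p\<^sup>2 + c * q\<^sup>2"
    using h2 c by (smt (verit, best) mult_le_cancel_left_pos)
  finally show ?thesis .
qed

lemma one_step:
  fixes D :: "'b measure"
    and f :: "'b \<Rightarrow> 'a::euclidean_space \<Rightarrow> real"
    and g :: "'b \<Rightarrow> 'a \<Rightarrow> 'a"
    and F :: "'a \<Rightarrow> real"
    and G :: "'a \<Rightarrow> 'a"
    and \<mu> \<delta> \<sigma> \<gamma> :: real
    and xs x :: 'a
  assumes D: "prob_space D"
    and F_def: "\<And>x. integrable D (\<lambda>\<xi>. f \<xi> x) \<and> F x = (\<integral>\<xi>. f \<xi> x \<partial>D)"
    and G_def: "\<And>x. integrable D (\<lambda>\<xi>. g \<xi> x) \<and> G x = (\<integral>\<xi>. g \<xi> x \<partial>D)"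
    and F_grad: "\<And>x. GDERIV F x :> G x"
    and A1: "AE \<xi> in D. \<forall>x. GDERIV (f \<xi>) x :> g \<xi> x"
    and A2: "AE \<xi> in D. convex_on UNIV (f \<xi>)"
    and A3: "\<And>x y. F x \<ge> F y + inner (G y) (x - y) + \<mu> / 2 * (norm (x - y))\<^sup>2"
    and xs_min: "\<And>x. F xs \<le> F x"
    and \<delta>_pos: "\<delta> > 0"
    and SS: "\<And>x. (\<integral>\<^sup>+ \<xi>. ennreal ((norm (g \<xi> x - G x - g \<xi> xs))\<^sup>2) \<partial>D)
                    \<le> ennreal (\<delta>\<^sup>2 * (norm (x - xs))\<^sup>2)"
    and BV: "(\<integral>\<^sup>+ \<xi>. ennreal ((norm (g \<xi> xs))\<^sup>2) \<partial>D) \<le> ennreal (\<sigma>\<^sup>2)"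
    and \<gamma>_pos: "0 < \<gamma>"
    and \<gamma>_le: "\<gamma> \<le> \<mu> / (4 * \<delta>\<^sup>2)"
  shows "(\<integral>\<^sup>+ \<xi>. ennreal ((norm (prox \<gamma> (f \<xi>) x - xs))\<^sup>2) \<partial>D)
     \<le> ennreal ((1 - 1/2 * min (\<gamma> * \<mu> / 2) 1) * (norm (x - xs))\<^sup>2 + 2 * \<gamma>\<^sup>2 * \<sigma>\<^sup>2)"
proof -
  interpret prob_space D by (rule D)
  have d2: "\<delta>\<^sup>2 > 0" using \<delta>_pos by simp
  have g4: "\<gamma> * (4 * \<delta>\<^sup>2) \<le> \<mu>" using \<gamma>_le d2 by (simp add: pos_le_divide_eq)
  have \<mu>_pos: "\<mu> > 0" using g4 \<gamma>_pos d2 by (smt (verit) mult_pos_pos)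
  have Gxs: "G xs = 0"
    using grad_zero_at_min[of F "G xs" xs] F_grad[of xs] xs_min by (simp add: gderiv_def)
  have contF: "continuous_on UNIV F"
    using F_grad unfolding gderiv_def by (meson continuous_at_imp_continuous_on has_derivative_continuous)
  have "\<exists>z. \<forall>w. F z + (norm (z - x))\<^sup>2 / (2 * \<gamma>) \<le> F w + (norm (w - x))\<^sup>2 / (2 * \<gamma>)"
  proof (rule exists_min[where c = "1/(2*\<gamma>)" and a = "F x" and b = "norm (G x)" and x = x])
    show "continuous_on UNIV (\<lambda>z. F z + (norm (z - x))\<^sup>2 / (2 * \<gamma>))"
      using \<gamma>_pos by (intro continuous_intros contF) auto
    show "0 < 1 / (2 * \<gamma>)" using \<gamma>_pos by simp
    fix w
    have "F x + inner (G x) (w - x) + \<mu> / 2 * (norm (w - x))\<^sup>2 \<le> F w" by (rule A3)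
    moreover have "- (norm (G x) * norm (w - x)) \<le> inner (G x) (w - x)"
      using norm_cauchy_schwarz[of "G x" "x - w"] by (simp add: norm_minus_commute inner_diff_right algebra_simps)
    moreover have "0 \<le> \<mu> / 2 * (norm (w - x))\<^sup>2" using \<mu>_pos by simp
    ultimately show "F x - norm (G x) * norm (w - x) + 1 / (2 * \<gamma>) * (norm (w - x))\<^sup>2
          \<le> F w + (norm (w - x))\<^sup>2 / (2 * \<gamma>)" by simp
  qed
  then obtain z where zmin: "\<And>w. F z + (norm (z - x))\<^sup>2 / (2 * \<gamma>) \<le> F w + (norm (w - x))\<^sup>2 / (2 * \<gamma>)"
    by blast
  have Gz: "G z = (1/\<gamma>) *\<^sub>R (x - z)"
    using prox_grad[of F "G z" z \<gamma> x] F_grad[of z] zmin \<gamma>_pos by (simp add: gderiv_def)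
  define e where "e = (\<lambda>\<xi>. g \<xi> z - G z)"
  define K where "K = (norm (x - xs))\<^sup>2 - (norm (x - z))\<^sup>2"
  define P where "P = (\<lambda>\<xi>. (K - 2 * \<gamma> * (f \<xi> z - f \<xi> xs)) + \<gamma>\<^sup>2 * (norm (e \<xi>))\<^sup>2)"
  have pw: "AE \<xi> in D. (norm (prox \<gamma> (f \<xi>) x - xs))\<^sup>2 \<le> P \<xi>"
    using A1 A2
  proof eventually_elim
    case (elim \<xi>)
    let ?h = "f \<xi>"
    let ?y = "prox \<gamma> (f \<xi>) x"
    have der: "\<And>v. (?h has_derivative (\<lambda>u. inner u (g \<xi> v))) (at v)"
      using elim(1) by (simp add: gderiv_def)
    have sp: "\<forall>w. ?h ?y + (norm (?y - x))\<^sup>2 / (2 * \<gamma>) \<le> ?h w + (norm (w - x))\<^sup>2 / (2 * \<gamma>)"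
      by (rule prox_spec[OF elim(2) der \<gamma>_pos])
    have tp: "?h ?y + (norm (?y - x))\<^sup>2 / (2*\<gamma>) + (norm (xs - ?y))\<^sup>2 / (2*\<gamma>) \<le> ?h xs + (norm (xs - x))\<^sup>2 / (2*\<gamma>)"
      by (rule three_point[OF elim(2) \<gamma>_pos sp])
    have tp2: "(norm (?y - x))\<^sup>2 + (norm (xs - ?y))\<^sup>2 + 2 * \<gamma> * ?h ?y \<le> 2 * \<gamma> * ?h xs + (norm (xs - x))\<^sup>2"
    proof -
      have "2 * \<gamma> * (?h ?y + (norm (?y - x))\<^sup>2 / (2*\<gamma>) + (norm (xs - ?y))\<^sup>2 / (2*\<gamma>))
          \<le> 2 * \<gamma> * (?h xs + (norm (xs - x))\<^sup>2 / (2*\<gamma>))"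
        using tp \<gamma>_pos by (intro mult_left_mono) auto
      thus ?thesis using \<gamma>_pos by (simp add: distrib_left)
    qed
    have tg: "?h z + inner (?y - z) (g \<xi> z) \<le> ?h ?y" by (rule tangent[OF elim(2) der])
    have tg2: "2 * \<gamma> * (?h z + inner (?y - z) (g \<xi> z)) \<le> 2 * \<gamma> * ?h ?y"
      using tg \<gamma>_pos by (intro mult_left_mono) auto
    have gz: "g \<xi> z = (1/\<gamma>) *\<^sub>R (x - z) + e \<xi>" unfolding e_def Gz by simp
    have ai: "- (norm ((?y - z) - (x - z)))\<^sup>2 - 2 * \<gamma> * inner (?y - z) ((1/\<gamma>) *\<^sub>R (x - z) + e \<xi>)
       = - (norm (x - z))\<^sup>2 + \<gamma>\<^sup>2 * (norm (e \<xi>))\<^sup>2 - (norm ((?y - z) + \<gamma> *\<^sub>R e \<xi>))\<^sup>2"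
      by (rule alg_ident[OF \<gamma>_pos])
    have n1: "(?y - z) - (x - z) = ?y - x" by simp
    have n2: "norm (xs - ?y) = norm (?y - xs)" "norm (xs - x) = norm (x - xs)"
      by (simp_all add: norm_minus_commute)
    have nn: "0 \<le> (norm ((?y - z) + \<gamma> *\<^sub>R e \<xi>))\<^sup>2" by simp
    show ?case
      using tp2 tg2 ai unfolding P_def K_def n1 n2 gz[symmetric]
      apply (simp add: distrib_left right_diff_distrib)
      using nn by linarith
  qed
  have mg: "\<And>w. (\<lambda>\<xi>. g \<xi> w) \<in> borel_measurable D" using G_def by (simp add: borel_measurable_integrable)
  have mf: "\<And>w. (\<lambda>\<xi>. f \<xi> w) \<in> borel_measurable D" using F_def by (simp add: borel_measurable_integrable)
  define a where "a = (\<lambda>\<xi>. g \<xi> z - G z - g \<xi> xs)"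
  have ma: "(\<lambda>\<xi>. (norm (a \<xi>))\<^sup>2) \<in> borel_measurable D"
    unfolding a_def using mg[of z] mg[of xs] by measurable
  have mb: "(\<lambda>\<xi>. (norm (g \<xi> xs))\<^sup>2) \<in> borel_measurable D"
    using mg[of xs] by measurable
  have me: "(\<lambda>\<xi>. (norm (e \<xi>))\<^sup>2) \<in> borel_measurable D"
    unfolding e_def using mg[of z] by measurable
  have SSz: "(\<integral>\<^sup>+ \<xi>. ennreal ((norm (a \<xi>))\<^sup>2) \<partial>D) \<le> ennreal (\<delta>\<^sup>2 * (norm (z - xs))\<^sup>2)"
    unfolding a_def by (rule SS)
  have ia: "integrable D (\<lambda>\<xi>. (norm (a \<xi>))\<^sup>2)"
    unfolding integrable_iff_bounded using ma SSz by (simp add: order_le_less_trans)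
  have ib: "integrable D (\<lambda>\<xi>. (norm (g \<xi> xs))\<^sup>2)"
    unfolding integrable_iff_bounded using mb BV by (simp add: order_le_less_trans)
  have Ea: "(\<integral>\<xi>. (norm (a \<xi>))\<^sup>2 \<partial>D) \<le> \<delta>\<^sup>2 * (norm (z - xs))\<^sup>2"
  proof -
    have "ennreal (\<integral>\<xi>. (norm (a \<xi>))\<^sup>2 \<partial>D) = (\<integral>\<^sup>+ \<xi>. ennreal ((norm (a \<xi>))\<^sup>2) \<partial>D)"
      using ia by (simp add: nn_integral_eq_integral)
    with SSz have "ennreal (\<integral>\<xi>. (norm (a \<xi>))\<^sup>2 \<partial>D) \<le> ennreal (\<delta>\<^sup>2 * (norm (z - xs))\<^sup>2)" by simp
    thus ?thesis by (subst (asm) ennreal_le_iff) auto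
  qed
  have Eb: "(\<integral>\<xi>. (norm (g \<xi> xs))\<^sup>2 \<partial>D) \<le> \<sigma>\<^sup>2"
  proof -
    have "ennreal (\<integral>\<xi>. (norm (g \<xi> xs))\<^sup>2 \<partial>D) = (\<integral>\<^sup>+ \<xi>. ennreal ((norm (g \<xi> xs))\<^sup>2) \<partial>D)"
      using ib by (simp add: nn_integral_eq_integral)
    with BV have "ennreal (\<integral>\<xi>. (norm (g \<xi> xs))\<^sup>2 \<partial>D) \<le> ennreal (\<sigma>\<^sup>2)" by simp
    thus ?thesis by (subst (asm) ennreal_le_iff) auto
  qed
  have ebound: "(norm (e \<xi>))\<^sup>2 \<le> 2 * (norm (a \<xi>))\<^sup>2 + 2 * (norm (g \<xi> xs))\<^sup>2" for \<xi>
  proof -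
    have "e \<xi> = a \<xi> + g \<xi> xs" unfolding e_def a_def by simp
    thus ?thesis using norm_sum_sq[of "a \<xi>" "g \<xi> xs"] by simp
  qed
  have iab: "integrable D (\<lambda>\<xi>. 2 * (norm (a \<xi>))\<^sup>2 + 2 * (norm (g \<xi> xs))\<^sup>2)"
    using ia ib by simp
  have ie: "integrable D (\<lambda>\<xi>. (norm (e \<xi>))\<^sup>2)"
    by (rule Bochner_Integration.integrable_bound[OF iab me]) (use ebound in \<open>auto intro!: AE_I2\<close>)
  have Ee: "(\<integral>\<xi>. (norm (e \<xi>))\<^sup>2 \<partial>D) \<le> 2 * (\<delta>\<^sup>2 * (norm (z - xs))\<^sup>2) + 2 * \<sigma>\<^sup>2"
  proof -
    have "(\<integral>\<xi>. (norm (e \<xi>))\<^sup>2 \<partial>D) \<le> (\<integral>\<xi>. 2 * (norm (a \<xi>))\<^sup>2 + 2 * (norm (g \<xi> xs))\<^sup>2 \<partial>D)"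
      using ie iab ebound by (intro integral_mono) auto
    also have "\<dots> = 2 * (\<integral>\<xi>. (norm (a \<xi>))\<^sup>2 \<partial>D) + 2 * (\<integral>\<xi>. (norm (g \<xi> xs))\<^sup>2 \<partial>D)"
      using ia ib by simp
    finally show ?thesis using Ea Eb by linarith
  qed
  have iP: "integrable D P" unfolding P_def using F_def ie by auto
  have EP: "(\<integral>\<xi>. P \<xi> \<partial>D) = K - 2 * \<gamma> * (F z - F xs) + \<gamma>\<^sup>2 * (\<integral>\<xi>. (norm (e \<xi>))\<^sup>2 \<partial>D)"
  proof -
    have i1: "integrable D (\<lambda>\<xi>. K - 2 * \<gamma> * (f \<xi> z - f \<xi> xs))" using F_def by auto
    have "(\<integral>\<xi>. P \<xi> \<partial>D) = (\<integral>\<xi>. K - 2 * \<gamma> * (f \<xi> z - f \<xi> xs) \<partial>D) + (\<integral>\<xi>. \<gamma>\<^sup>2 * (norm (e \<xi>))\<^sup>2 \<partial>D)"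
      unfolding P_def using i1 ie by (intro Bochner_Integration.integral_add) auto
    also have "(\<integral>\<xi>. K - 2 * \<gamma> * (f \<xi> z - f \<xi> xs) \<partial>D) = K - 2 * \<gamma> * (F z - F xs)"
      using F_def[of z] F_def[of xs] by (simp add: prob_space)
    finally show ?thesis by simp
  qed
  have Fz: "F z - F xs \<ge> \<mu> / 2 * (norm (z - xs))\<^sup>2" using A3[of xs z] Gxs by simp
  define p where "p = norm (x - z)"
  define q where "q = norm (z - xs)"
  define r where "r = norm (x - xs)"
  have tri: "r \<le> p + q" unfolding p_def q_def r_def using norm_triangle_ineq[of "x - z" "z - xs"] by simp
  have rate: "(1/2 * min (\<gamma> * \<mu> / 2) 1) * r\<^sup>2 \<le> p\<^sup>2 + (\<gamma> * \<mu> / 2) * q\<^sup>2"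
    using rate_ineq[of "\<gamma> * \<mu> / 2" p q r] tri \<gamma>_pos \<mu>_pos unfolding p_def q_def r_def by simp
  have c1: "2 * \<gamma> * (\<mu> / 2 * q\<^sup>2) \<le> 2 * \<gamma> * (F z - F xs)"
    using Fz \<gamma>_pos unfolding q_def by (intro mult_left_mono) auto
  have c2: "\<gamma>\<^sup>2 * (\<integral>\<xi>. (norm (e \<xi>))\<^sup>2 \<partial>D) \<le> \<gamma>\<^sup>2 * (2 * (\<delta>\<^sup>2 * q\<^sup>2) + 2 * \<sigma>\<^sup>2)"
    using Ee unfolding q_def by (intro mult_left_mono) auto
  have c3: "\<gamma>\<^sup>2 * (2 * (\<delta>\<^sup>2 * q\<^sup>2)) \<le> (\<gamma> * \<mu> / 2) * q\<^sup>2"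
  proof -
    have "\<gamma>\<^sup>2 * (2 * (\<delta>\<^sup>2 * q\<^sup>2)) = (\<gamma> * (4 * \<delta>\<^sup>2)) * (\<gamma> * q\<^sup>2 / 2)" by (simp add: power2_eq_square)
    also have "\<dots> \<le> \<mu> * (\<gamma> * q\<^sup>2 / 2)" using g4 \<gamma>_pos by (intro mult_right_mono) auto
    finally show ?thesis by (simp add: mult.commute mult.left_commute)
  qed
  have EPb: "(\<integral>\<xi>. P \<xi> \<partial>D) \<le> (1 - 1/2 * min (\<gamma> * \<mu> / 2) 1) * (norm (x - xs))\<^sup>2 + 2 * \<gamma>\<^sup>2 * \<sigma>\<^sup>2"
  proof -
    have "(\<integral>\<xi>. P \<xi> \<partial>D) \<le> r\<^sup>2 - p\<^sup>2 - (\<gamma> * \<mu> / 2) * q\<^sup>2 + 2 * \<gamma>\<^sup>2 * \<sigma>\<^sup>2"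
      unfolding EP K_def using c1 c2 c3 unfolding p_def q_def r_def by (simp add: algebra_simps)
    also have "\<dots> \<le> (1 - 1/2 * min (\<gamma> * \<mu> / 2) 1) * r\<^sup>2 + 2 * \<gamma>\<^sup>2 * \<sigma>\<^sup>2"
      using rate by (simp add: algebra_simps)
    finally show ?thesis unfolding r_def .
  qed
  have "(\<integral>\<^sup>+ \<xi>. ennreal ((norm (prox \<gamma> (f \<xi>) x - xs))\<^sup>2) \<partial>D) \<le> (\<integral>\<^sup>+ \<xi>. ennreal (P \<xi>) \<partial>D)"
    using pw by (intro nn_integral_mono_AE) (auto elim!: eventually_mono intro: ennreal_leI)
  also have "\<dots> = ennreal (\<integral>\<xi>. P \<xi> \<partial>D)"
  proof (rule nn_integral_eq_integral[OF iP])
    show "AE \<xi> in D. 0 \<le> P \<xi>" using pw by (auto elim!: eventually_mono intro: order_trans[OF zero_le_power2])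
  qed
  also have "\<dots> \<le> ennreal ((1 - 1/2 * min (\<gamma> * \<mu> / 2) 1) * (norm (x - xs))\<^sup>2 + 2 * \<gamma>\<^sup>2 * \<sigma>\<^sup>2)"
    using EPb by (rule ennreal_leI)
  finally show ?thesis .
qed

theorem theorem6p3:
  fixes D :: "'b measure"
    and f :: "'b \<Rightarrow> 'a::euclidean_space \<Rightarrow> real"
    and g :: "'b \<Rightarrow> 'a \<Rightarrow> 'a"
    and F :: "'a \<Rightarrow> real"
    and G :: "'a \<Rightarrow> 'a"
    and \<mu> \<delta> \<sigma> \<gamma> :: real
    and xs x0 :: 'a
  assumes D: "prob_space D"
    and f_meas: "(\<lambda>(\<xi>, x). f \<xi> x) \<in> borel_measurable (D \<Otimes>\<^sub>M borel)"
    and F_def: "\<And>x. integrable D (\<lambda>\<xi>. f \<xi> x) \<and> F x = (\<integral>\<xi>. f \<xi> x \<partial>D)"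
    and G_def: "\<And>x. integrable D (\<lambda>\<xi>. g \<xi> x) \<and> G x = (\<integral>\<xi>. g \<xi> x \<partial>D)"
    and F_grad: "\<And>x. GDERIV F x :> G x"
    and A1: "AE \<xi> in D. \<forall>x. GDERIV (f \<xi>) x :> g \<xi> x"
    and A2: "AE \<xi> in D. convex_on UNIV (f \<xi>)"
    and A3: "\<And>x y. F x \<ge> F y + inner (G y) (x - y) + \<mu> / 2 * (norm (x - y))\<^sup>2"
    and xs_min: "\<And>x. F xs \<le> F x"
    and \<delta>_pos: "\<delta> > 0"
    and SS: "\<And>x. (\<integral>\<^sup>+ \<xi>. ennreal ((norm (g \<xi> x - G x - g \<xi> xs))\<^sup>2) \<partial>D)
                    \<le> ennreal (\<delta>\<^sup>2 * (norm (x - xs))\<^sup>2)"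
    and BV: "(\<integral>\<^sup>+ \<xi>. ennreal ((norm (g \<xi> xs))\<^sup>2) \<partial>D) \<le> ennreal (\<sigma>\<^sup>2)"
    and \<gamma>_pos: "0 < \<gamma>"
    and \<gamma>_le: "\<gamma> \<le> \<mu> / (4 * \<delta>\<^sup>2)"
  shows "(\<integral>\<^sup>+ \<omega>. ennreal ((norm (sppm \<gamma> f x0 \<omega> k - xs))\<^sup>2) \<partial>(PiM {..<k} (\<lambda>_. D)))
           \<le> ennreal ((1 - 1/2 * min (\<gamma> * \<mu> / 2) 1) ^ k * (norm (x0 - xs))\<^sup>2
                      + 4 * max (2 / (\<gamma> * \<mu>)) 1 * \<gamma>\<^sup>2 * \<sigma>\<^sup>2)"
proof -
  define \<rho> where "\<rho> = 1/2 * min (\<gamma> * \<mu> / 2) 1"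
  define R where "R = 1 - \<rho>"
  define C where "C = 2 * \<gamma>\<^sup>2 * \<sigma>\<^sup>2"
  define N0 where "N0 = (norm (x0 - xs))\<^sup>2"
  have d2: "\<delta>\<^sup>2 > 0" using \<delta>_pos by simp
  have g4: "\<gamma> * (4 * \<delta>\<^sup>2) \<le> \<mu>" using \<gamma>_le d2 by (simp add: pos_le_divide_eq)
  have \<mu>_pos: "\<mu> > 0" using g4 \<gamma>_pos d2 by (smt (verit) mult_pos_pos)
  have \<rho>_pos: "\<rho> > 0" unfolding \<rho>_def using \<gamma>_pos \<mu>_pos by simp
  have \<rho>_le: "\<rho> \<le> 1/2" unfolding \<rho>_def by simp
  have R_pos: "R > 0" "R \<le> 1" unfolding R_def using \<rho>_pos \<rho>_le by auto
  have C0: "C \<ge> 0" unfolding C_def by simp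
  have PD: "\<And>I. prob_space (PiM I (\<lambda>_. D))" by (rule prob_space_PiM) (use D in auto)
  have step: "\<And>x. (\<integral>\<^sup>+ \<xi>. ennreal ((norm (prox \<gamma> (f \<xi>) x - xs))\<^sup>2) \<partial>D) \<le> ennreal (R * (norm (x - xs))\<^sup>2 + C)"
    unfolding R_def \<rho>_def C_def
    by (rule one_step[OF D F_def G_def F_grad A1 A2 A3 xs_min \<delta>_pos SS BV \<gamma>_pos \<gamma>_le])
  have main: "(\<integral>\<^sup>+ \<omega>. ennreal ((norm (sppm \<gamma> f x0 \<omega> k - xs))\<^sup>2) \<partial>(PiM {..<k} (\<lambda>_. D)))
           \<le> ennreal (R ^ k * N0 + C * (\<Sum>i<k. R ^ i))" for k
  proof (induction k)
    case 0
    interpret P0: prob_space "PiM ({}::nat set) (\<lambda>_. D)" by (rule PD)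
    show ?case by (simp add: N0_def P0.emeasure_space_1)
  next
    case (Suc k)
    interpret Pk: prob_space "PiM {..<k} (\<lambda>_. D)" by (rule PD)
    have "(\<integral>\<^sup>+ \<omega>. ennreal ((norm (sppm \<gamma> f x0 \<omega> (Suc k) - xs))\<^sup>2) \<partial>(PiM {..<Suc k} (\<lambda>_. D)))
        = (\<integral>\<^sup>+ \<omega>. ennreal ((norm (sppm \<gamma> f x0 \<omega> (Suc k) - xs))\<^sup>2) \<partial>(PiM (insert k {..<k}) (\<lambda>_. D)))"
      by (simp add: lessThan_Suc)
    also have "\<dots> \<le> (\<integral>\<^sup>+ w. (\<integral>\<^sup>+ e. ennreal ((norm (sppm \<gamma> f x0 (w(k := e)) (Suc k) - xs))\<^sup>2) \<partial>D) \<partial>(PiM {..<k} (\<lambda>_. D)))"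
      by (rule lower_insert[OF D])
    also have "\<dots> = (\<integral>\<^sup>+ \<omega>. (\<integral>\<^sup>+ \<xi>. ennreal ((norm (prox \<gamma> (f \<xi>) (sppm \<gamma> f x0 \<omega> k) - xs))\<^sup>2) \<partial>D) \<partial>(PiM {..<k} (\<lambda>_. D)))"
      by (simp add: sppm_upd)
    also have "\<dots> \<le> (\<integral>\<^sup>+ \<omega>. ennreal R * ennreal ((norm (sppm \<gamma> f x0 \<omega> k - xs))\<^sup>2) + ennreal C \<partial>(PiM {..<k} (\<lambda>_. D)))"
    proof (rule nn_integral_mono)
      fix \<omega>
      have "ennreal (R * (norm (sppm \<gamma> f x0 \<omega> k - xs))\<^sup>2 + C) = ennreal R * ennreal ((norm (sppm \<gamma> f x0 \<omega> k - xs))\<^sup>2) + ennreal C"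
        using R_pos C0 by (simp add: ennreal_plus ennreal_mult)
      thus "(\<integral>\<^sup>+ \<xi>. ennreal ((norm (prox \<gamma> (f \<xi>) (sppm \<gamma> f x0 \<omega> k) - xs))\<^sup>2) \<partial>D)
          \<le> ennreal R * ennreal ((norm (sppm \<gamma> f x0 \<omega> k - xs))\<^sup>2) + ennreal C"
        using step by metis
    qed
    also have "\<dots> \<le> ennreal R * (\<integral>\<^sup>+ \<omega>. ennreal ((norm (sppm \<gamma> f x0 \<omega> k - xs))\<^sup>2) \<partial>(PiM {..<k} (\<lambda>_. D))) + ennreal C"
      by (rule affine_bound[OF PD R_pos(1)]) simp
    also have "\<dots> \<le> ennreal R * ennreal (R ^ k * N0 + C * (\<Sum>i<k. R ^ i)) + ennreal C"
      using Suc.IH by (intro add_right_mono mult_left_mono) auto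
    also have "\<dots> = ennreal (R ^ Suc k * N0 + C * (\<Sum>i<Suc k. R ^ i))"
    proof -
      have nn: "0 \<le> R ^ k * N0 + C * (\<Sum>i<k. R ^ i)"
        using R_pos C0 unfolding N0_def by (intro add_nonneg_nonneg mult_nonneg_nonneg sum_nonneg) auto
      have "ennreal R * ennreal (R ^ k * N0 + C * (\<Sum>i<k. R ^ i)) + ennreal C
          = ennreal (R * (R ^ k * N0 + C * (\<Sum>i<k. R ^ i)) + C)"
        using R_pos C0 nn by (simp add: ennreal_plus ennreal_mult)
      also have "R * (R ^ k * N0 + C * (\<Sum>i<k. R ^ i)) + C = R ^ Suc k * N0 + C * (\<Sum>i<Suc k. R ^ i)"
      proof -
        have gs: "R * (\<Sum>i<j. R ^ i) + 1 = (\<Sum>i<Suc j. R ^ i)" for j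
          by (induction j) (simp_all add: algebra_simps)
        have "C * (R * (\<Sum>i<k. R ^ i) + 1) = C * (\<Sum>i<Suc k. R ^ i)" using gs[of k] by simp
        thus ?thesis by (simp add: algebra_simps)
      qed
      finally show ?thesis .
    qed
    finally show ?case .
  qed
  have geo: "(\<Sum>i<k. R ^ i) \<le> 1 / \<rho>"
  proof -
    have "(\<Sum>i<k. R ^ i) = (1 - R ^ k) / (1 - R)" using R_pos \<rho>_pos unfolding R_def
      by (subst sum_gp_strict) auto
    also have "\<dots> \<le> 1 / (1 - R)" using R_pos \<rho>_pos unfolding R_def
      by (intro divide_right_mono) auto
    finally show ?thesis unfolding R_def by simp
  qed
  have rr: "2 / \<rho> = 4 * max (2 / (\<gamma> * \<mu>)) 1"
  proof (cases "\<gamma> * \<mu> / 2 \<le> 1")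
    case True
    hence "2 / (\<gamma> * \<mu>) \<ge> 1" using \<gamma>_pos \<mu>_pos by (simp add: field_simps)
    thus ?thesis using True unfolding \<rho>_def by (simp add: min_def max_def field_simps)
  next
    case False
    hence "2 / (\<gamma> * \<mu>) < 1" using \<gamma>_pos \<mu>_pos by (simp add: field_simps)
    thus ?thesis using False unfolding \<rho>_def by (simp add: min_def max_def field_simps)
  qed
  have "C * (\<Sum>i<k. R ^ i) \<le> C * (1 / \<rho>)" using geo C0 by (rule mult_left_mono)
  also have "C * (1 / \<rho>) = 4 * max (2 / (\<gamma> * \<mu>)) 1 * \<gamma>\<^sup>2 * \<sigma>\<^sup>2"
  proof -
    have "C * (1 / \<rho>) = (2 / \<rho>) * (\<gamma>\<^sup>2 * \<sigma>\<^sup>2)" unfolding C_def by simp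
    thus ?thesis unfolding rr by simp
  qed
  finally have "R ^ k * N0 + C * (\<Sum>i<k. R ^ i) \<le> R ^ k * N0 + 4 * max (2 / (\<gamma> * \<mu>)) 1 * \<gamma>\<^sup>2 * \<sigma>\<^sup>2"
    by simp
  hence "ennreal (R ^ k * N0 + C * (\<Sum>i<k. R ^ i)) \<le> ennreal (R ^ k * N0 + 4 * max (2 / (\<gamma> * \<mu>)) 1 * \<gamma>\<^sup>2 * \<sigma>\<^sup>2)"
    by (rule ennreal_leI)
  with main[of k] show ?thesis unfolding R_def \<rho>_def N0_def by simp
qed

end
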